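(* Let $n$ and $m$ be integers with $n\ge m\ge3$, and let $M=(m_1,\dots,m_t)$ be a list of integers with $m_i\ge2$ for all $i$ and $\sum M=m$. Then there is a subgraph $G$ of $2K_n$ such that both of the following hold: - $G$ admits a decomposition into cycles of lengths $m_1,\dots,m_t$ together with one $n$-cycle; - $G$ admits a decomposition into one $m$-cycle and one $n$-cycle.
   Context: Graphs may have multiple edges but no loops. $2K_n$ is the complete multigraph on $n$ vertices with two edges joining each pair of distinct vertices. For $m\ge2$, an $m$-cycle is a cycle with $m$ edges; a $2$-cycle consists of two parallel edges. *)

theory Defs
  imports Main "HOL-Library.Multiset"
begin

text \<open>Multigraphs on vertex set nat: a multigraph is a multiset of edges, each edge an
  unordered pair, represented as a two-element set.\<close>

definition subgraph_2K :: "nat \<Rightarrow> nat set multiset \<Rightarrow> bool" where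
  "subgraph_2K n G \<longleftrightarrow>
     (\<forall>e \<in># G. \<exists>u v. u < n \<and> v < n \<and> u \<noteq> v \<and> e = {u, v}) \<and>
     (\<forall>e. count G e \<le> 2)"

definition cycle_edges :: "nat list \<Rightarrow> nat set multiset" where
  "cycle_edges vs = mset (map (\<lambda>i. {vs ! i, vs ! ((i + 1) mod length vs)}) [0..<length vs])"

text \<open>vs describes a k-cycle (k \<ge> 2): k distinct vertices in cyclic order. For k = 2 the
  edge multiset consists of two parallel edges.\<close>
definition is_cycle :: "nat \<Rightarrow> nat list \<Rightarrow> bool" where
  "is_cycle k vs \<longleftrightarrow> k \<ge> 2 \<and> length vs = k \<and> distinct vs"

definition cycle_decomp :: "nat set multiset \<Rightarrow> nat list \<Rightarrow> bool" where
  "cycle_decomp G Ls \<longleftrightarrow>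
     (\<exists>cs. length cs = length Ls \<and> (\<forall>i < length cs. is_cycle (Ls ! i) (cs ! i)) \<and>
           G = sum_list (map cycle_edges cs))"

end

theory Submission imports Defs begin

fun pe :: "nat list \<Rightarrow> nat set multiset" where
  "pe (a # b # L) = add_mset {a, b} (pe (b # L))"
| "pe _ = {#}"

lemma pe_Cons: "L \<noteq> [] \<Longrightarrow> pe (a # L) = add_mset {a, hd L} (pe L)"
  by (cases L) auto

lemma pe_append_Cons: "pe (xs @ y # ys) = pe (xs @ [y]) + pe (y # ys)"
proof (induction xs)
  case Nil then show ?case by simp
next
  case (Cons a xs) then show ?case by (cases xs) auto
qed

lemma pe_append_gen: "xs \<noteq> [] \<Longrightarrow> pe (xs @ ys) = pe xs + pe (last xs # ys)"
  by (metis append_butlast_last_id append_Cons append_Nil append_assoc pe_append_Cons)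

lemma pe_snoc: "xs \<noteq> [] \<Longrightarrow> pe (xs @ [y]) = add_mset {last xs, y} (pe xs)"
  by (simp add: pe_append_gen)

lemma pe_idx: "pe L = mset (map (\<lambda>i. {L!i, L!(i+1)}) [0..<length L - 1])"
proof (induction L rule: pe.induct)
  case (1 a b L)
  have "[0..<length (a # b # L) - 1] = 0 # map Suc [0..<length L]"
    by (simp add: map_Suc_upt upt_conv_Cons del: upt_Suc)
  then show ?case using 1 by (simp add: o_def)
qed auto

lemma cycle_edges_pe: "L \<noteq> [] \<Longrightarrow> cycle_edges L = add_mset {last L, hd L} (pe L)"
proof -
  assume "L \<noteq> []"
  then obtain k where k: "length L = Suc k" by (cases L) auto
  define g where "g = (\<lambda>i. {L ! i, L ! ((i + 1) mod length L)})"
  define h where "h = (\<lambda>i. {L ! i, L ! (i + 1)})"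
  have 1: "map g [0..<length L] = map g [0..<k] @ [g k]" using k by simp
  have 2: "map g [0..<k] = map h [0..<k]"
    using k unfolding g_def h_def by (intro map_cong) auto
  have 3: "g k = {last L, hd L}" using k \<open>L \<noteq> []\<close> unfolding g_def
    by (simp add: last_conv_nth hd_conv_nth)
  have "cycle_edges L = mset (map g [0..<length L])" unfolding cycle_edges_def g_def by simp
  also have "\<dots> = add_mset {last L, hd L} (mset (map h [0..<k]))" unfolding 1 2 3 by simp
  also have "mset (map h [0..<k]) = pe L" unfolding pe_idx h_def k by simp
  finally show ?thesis .
qed

lemma pe_rev: "pe (rev L) = pe L"
proof (induction L)
  case (Cons a L)
  then show ?case
    by (cases "L = []") (auto simp: pe_snoc pe_Cons last_rev insert_commute)
qed simp

lemma cycle_edges_rev: "cycle_edges (rev L) = cycle_edges L"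
  by (cases "L = []") (auto simp: cycle_edges_pe pe_rev last_rev hd_rev insert_commute)

lemma cycle_edges_rot: "cycle_edges (a # L) = cycle_edges (L @ [a])"
  by (cases "L = []") (auto simp: cycle_edges_pe pe_snoc pe_Cons)

lemma build:
  "\<forall>q\<in>set R. 2 \<le> q \<Longrightarrow> 1 \<le> s \<Longrightarrow> distinct D \<Longrightarrow> set D = {0..<s} \<Longrightarrow> D \<noteq> [] \<Longrightarrow>
   hd D = s - 1 \<Longrightarrow> distinct (W @ [last D, s - 1]) \<Longrightarrow> set (W @ [last D, s - 1]) = {0..<s} \<Longrightarrow>
   hd (W @ [last D, s - 1]) = 0 \<Longrightarrow>
   cycle_edges [0..<s] + cycle_edges D = sum_list (map cycle_edges cs) + cycle_edges (W @ [last D, s - 1]) \<Longrightarrow>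
   length cs = length Ls \<Longrightarrow> (\<forall>i<length cs. is_cycle (Ls!i) (cs!i)) \<Longrightarrow>
   \<exists>D W cs. distinct D \<and> set D = {0..<s + sum_list R} \<and> D \<noteq> [] \<and> hd D = s + sum_list R - 1 \<and>
     distinct (W @ [last D, s + sum_list R - 1]) \<and> set (W @ [last D, s + sum_list R - 1]) = {0..<s + sum_list R} \<and>
     hd (W @ [last D, s + sum_list R - 1]) = 0 \<and>
     cycle_edges [0..<s + sum_list R] + cycle_edges D = sum_list (map cycle_edges cs) + cycle_edges (W @ [last D, s + sum_list R - 1]) \<and>
     length cs = length (Ls @ R) \<and> (\<forall>i<length cs. is_cycle ((Ls @ R)!i) (cs!i))"
proof (induction R arbitrary: s D W cs Ls)
  case Nil
  then show ?case by (intro exI[of _ D] exI[of _ W] exI[of _ cs]) simp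
next
  case (Cons q R)
  note hyp = Cons.prems
  have q2: "2 \<le> q" using hyp(1) by simp
  define y where "y = s - 1"
  define x where "x = last D"
  define f where "f = s"
  define e where "e = s + q - 1"
  define I where "I = [s+1..<s+q-1]"
  define blk where "blk = [s..<s+q]"
  define S where "S = sum_list (map cycle_edges cs)"
  define D1 where "D1 = D @ I @ [f, e]"
  define W' where "W' = W @ [x] @ I @ [f]"
  have blk_eq: "blk = f # I @ [e]"
  proof -
    obtain r where r: "q = Suc (Suc r)" using q2 by (metis add_2_eq_Suc le_Suc_ex)
    have "[s..<s+q] = [s..<s+q-1] @ [s+q-1]" unfolding r by simp
    moreover have "[s..<s+q-1] = s # [s+1..<s+q-1]" using q2 by (simp add: upt_conv_Cons)
    ultimately show ?thesis unfolding blk_def f_def I_def e_def by simp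
  qed
  have setI: "set I = {s+1..<s+q-1}" unfolding I_def by simp
  have setblk: "set blk = {s..<s+q}" unfolding blk_def by simp
  have Dlast: "D = butlast D @ [x]" unfolding x_def using hyp(5) by simp
  have a: "cycle_edges [0..<s] = add_mset {y, 0} (pe [0..<s])"
    using hyp(2) by (simp add: cycle_edges_pe y_def hd_upt)
  have b1: "[0..<s+q] = [0..<s] @ f # (I @ [e])"
  proof -
    have "[0..<s+q] = [0..<s] @ blk" unfolding blk_def by (rule upt_add_eq_append) simp
    then show ?thesis unfolding blk_eq by simp
  qed
  have b: "cycle_edges [0..<s+q] = add_mset {e, 0} (add_mset {y, f} (pe [0..<s]) + pe blk)"
  proof -
    have "cycle_edges [0..<s+q] = add_mset {e, 0} (pe [0..<s+q])"
      using q2 by (simp add: cycle_edges_pe e_def hd_upt)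
    moreover have "pe [0..<s+q] = pe ([0..<s] @ [f]) + pe blk"
      unfolding b1 blk_eq by (rule pe_append_Cons)
    moreover have "pe ([0..<s] @ [f]) = add_mset {y, f} (pe [0..<s])"
      using hyp(2) by (simp add: pe_snoc y_def)
    ultimately show ?thesis by simp
  qed
  have c: "cycle_edges blk = add_mset {e, f} (pe blk)"
    by (simp add: cycle_edges_pe blk_eq)
  have d: "cycle_edges D = add_mset {x, y} (pe D)"
    using hyp(5,6) by (simp add: cycle_edges_pe x_def y_def)
  have pxIfe: "pe (x # I @ [f, e]) = add_mset {f, e} (pe (x # I @ [f]))"
    using pe_append_gen[of "x # I @ [f]" "[e]"] by simp
  have e1: "cycle_edges (rev D1) = add_mset {e, y} (pe D + pe (x # I @ [f]) + {#{f,e}#})"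
  proof -
    have "cycle_edges (rev D1) = add_mset {e, y} (pe D1)"
      unfolding cycle_edges_rev using hyp(5,6) by (simp add: cycle_edges_pe D1_def y_def)
    moreover have "pe D1 = pe D + pe (x # I @ [f, e])"
      unfolding D1_def using pe_append_gen[OF hyp(5), of "I @ [f, e]"] by (simp add: x_def)
    ultimately show ?thesis using pxIfe by simp
  qed
  have hdW: "hd (W @ [x] @ I @ [f] @ [y, e]) = 0"
    using hyp(9) by (cases W) (auto simp: x_def y_def)
  have g1: "cycle_edges (W' @ [y, e]) = add_mset {e, 0} (pe (W @ [x]) + pe (x # I @ [f]) + {#{f,y}, {y,e}#})"
  proof -
    have "cycle_edges (W' @ [y, e]) = add_mset {e, 0} (pe (W' @ [y, e]))"
      using hdW by (simp add: cycle_edges_pe W'_def)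
    moreover have "pe (W' @ [y, e]) = pe W' + {#{f,y}, {y,e}#}"
      using pe_append_gen[of W' "[y, e]"] by (simp add: W'_def)
    moreover have "pe W' = pe (W @ [x]) + pe (x # I @ [f])"
      unfolding W'_def using pe_append_Cons[of W x "I @ [f]"] by simp
    ultimately show ?thesis by simp
  qed
  have g: "cycle_edges (W @ [x, y]) = add_mset {y, 0} (add_mset {x, y} (pe (W @ [x])))"
  proof -
    have "cycle_edges (W @ [x, y]) = add_mset {y, 0} (pe (W @ [x, y]))"
      using hyp(9) by (simp add: cycle_edges_pe x_def y_def)
    moreover have "pe (W @ [x, y]) = pe (W @ [x]) + pe [x, y]"
      using pe_append_Cons[of W x "[y]"] by simp
    ultimately show ?thesis by simp
  qed
  have eq0: "pe [0..<s] + pe D = S + pe (W @ [x])"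
    using hyp(10) unfolding a d g S_def x_def[symmetric] y_def[symmetric] by simp
  have eqn: "cycle_edges [0..<s+q] + cycle_edges (rev D1) = (S + cycle_edges blk) + cycle_edges (W' @ [y, e])"
  proof -
    have ee: "{y,f} = {f,y}" "{e,y} = {y,e}" "{f,e}={e,f}" by auto
    have "cycle_edges [0..<s+q] + cycle_edges (rev D1) =
      (pe [0..<s] + pe D) + (pe blk + pe (x # I @ [f]) + {#{e,0},{f,y},{y,e},{e,f}#})"
      unfolding b e1 ee by (simp add: add_mset_commute)
    also have "\<dots> = (S + pe (W @ [x])) + (pe blk + pe (x # I @ [f]) + {#{e,0},{f,y},{y,e},{e,f}#})"
      by (simp only: eq0)
    also have "\<dots> = (S + cycle_edges blk) + cycle_edges (W' @ [y, e])"
      unfolding c g1 by (simp add: add_mset_commute)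
    finally show ?thesis .
  qed
  have fe: "f \<noteq> e" "f \<notin> set I" "e \<notin> set I" "f < s + q" "e < s + q" "s \<le> f" "s \<le> e"
    using q2 setI unfolding f_def e_def by auto
  have dI: "distinct I" unfolding I_def by simp
  have setN: "set (I @ [f, e]) = {s..<s+q}"
    using setblk unfolding blk_eq by auto
  have sD: "set D = {0..<s}" using hyp(4) .
  have d1: "distinct (rev D1)" unfolding D1_def using hyp(3) sD setN dI fe by auto
  have s1: "set (rev D1) = {0..<s+q}" unfolding D1_def using sD setN by auto
  have n1: "rev D1 \<noteq> []" unfolding D1_def by simp
  have h1: "hd (rev D1) = s + q - 1" unfolding D1_def by (simp add: e_def)
  have l1: "last (rev D1) = s - 1" unfolding D1_def using hyp(5,6) by (simp add: last_rev)
  have sW: "set (W @ [x, y]) = {0..<s}" "distinct (W @ [x, y])"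
    using hyp(7,8) unfolding x_def y_def by auto
  have lo: "\<forall>z\<in>set (W @ [x, y]). z < s" using sW(1) by auto
  have hi: "\<forall>z\<in>set (I @ [f, e]). s \<le> z" using setN by auto
  have "distinct (W' @ [y, e])"
  proof -
    have "distinct (I @ [f,e])" using dI fe by auto
    moreover have "set (W @ [x, y]) \<inter> set (I @ [f, e]) = {}" using lo hi by force
    ultimately have "distinct ((W @ [x, y]) @ (I @ [f, e]))"
      using sW(2) by (simp only: distinct_append)
    moreover have "set ((W @ [x, y]) @ (I @ [f, e])) = set (W' @ [y, e])" unfolding W'_def by auto
    moreover have "length ((W @ [x, y]) @ (I @ [f, e])) = length (W' @ [y, e])" unfolding W'_def by auto
    ultimately show ?thesis by (metis card_distinct distinct_card)
  qed
  then have dW: "distinct (W' @ [last (rev D1), s + q - 1])" unfolding l1 by (simp add: y_def e_def)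
  have "set (W' @ [y, e]) = set (W @ [x, y]) \<union> set (I @ [f, e])" unfolding W'_def by auto
  also have "\<dots> = {0..<s+q}" unfolding sW(1) setN by auto
  finally have "set (W' @ [y, e]) = {0..<s+q}" .
  then have sW': "set (W' @ [last (rev D1), s + q - 1]) = {0..<s+q}" unfolding l1 by (simp add: y_def e_def)
  have hW': "hd (W' @ [last (rev D1), s + q - 1]) = 0"
    using hdW unfolding l1 W'_def by (simp add: y_def e_def)
  have eq': "cycle_edges [0..<s+q] + cycle_edges (rev D1) = sum_list (map cycle_edges (cs @ [blk]))
     + cycle_edges (W' @ [last (rev D1), s + q - 1])"
    using eqn unfolding l1 S_def by (simp add: y_def e_def)
  have lc: "length (cs @ [blk]) = length (Ls @ [q])" using hyp(11) by simp
  have cyc: "\<forall>i<length (cs @ [blk]). is_cycle ((Ls @ [q]) ! i) ((cs @ [blk]) ! i)"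
  proof (intro allI impI)
    fix i assume "i < length (cs @ [blk])"
    then consider "i < length cs" | "i = length cs" by fastforce
    then show "is_cycle ((Ls @ [q]) ! i) ((cs @ [blk]) ! i)"
    proof cases
      case 1 then show ?thesis using hyp(11,12) by (simp add: nth_append)
    next
      case 2 then show ?thesis using hyp(11) q2 by (simp add: nth_append is_cycle_def blk_def)
    qed
  qed
  have "1 \<le> s + q" using q2 by simp
  from Cons.IH[OF _ this d1 s1 n1 h1 dW sW' hW' eq' lc cyc] hyp(1)
  show ?case by (simp add: add.assoc)
qed


lemma mod_succ_ne: "2 \<le> (k::nat) \<Longrightarrow> i < k \<Longrightarrow> (i + 1) mod k \<noteq> i"
  by (cases "i + 1 < k") (auto simp: mod_if)

lemma ce_edge:
  assumes "distinct L" "2 \<le> length L" "set L \<subseteq> {0..<n}" "e \<in># cycle_edges L"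
  shows "\<exists>u v. u < n \<and> v < n \<and> u \<noteq> v \<and> e = {u, v}"
proof -
  obtain i where i: "i < length L" "e = {L!i, L!((i+1) mod length L)}"
    using assms(4) unfolding cycle_edges_def by auto
  have "0 < length L" using i(1) by arith
  then have j: "(i+1) mod length L < length L" by simp
  have "L!i \<noteq> L!((i+1) mod length L)"
    using assms(1) i(1) j mod_succ_ne[OF assms(2) i(1)] by (simp add: nth_eq_iff_index_eq)
  moreover have "L!i < n" "L!((i+1) mod length L) < n" using assms(3) i(1) j nth_mem by fastforce+
  ultimately show ?thesis using i(2) by blast
qed

lemma ce_count:
  assumes "distinct L" "3 \<le> length L"
  shows "count (cycle_edges L) e \<le> 1"
proof -
  define k where "k = length L"
  define g where "g = (\<lambda>i. {L ! i, L ! ((i + 1) mod k)})"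
  have "inj_on g {0..<k}"
  proof
    fix i j assume ij: "i \<in> {0..<k}" "j \<in> {0..<k}" "g i = g j"
    have k3: "3 \<le> k" using assms(2) k_def by simp
    have im: "(i+1) mod k < k" "(j+1) mod k < k" using ij by auto
    from ij(3) have "(L!i = L!j \<and> L!((i+1) mod k) = L!((j+1) mod k)) \<or>
                     (L!i = L!((j+1) mod k) \<and> L!((i+1) mod k) = L!j)"
      unfolding g_def doubleton_eq_iff by blast
    then show "i = j"
    proof
      assume "L!i = L!j \<and> L!((i+1) mod k) = L!((j+1) mod k)"
      then show ?thesis using assms(1) ij by (simp add: nth_eq_iff_index_eq k_def)
    next
      assume a: "L!i = L!((j+1) mod k) \<and> L!((i+1) mod k) = L!j"
      have 1: "i = (j+1) mod k"
        using a assms(1) ij im unfolding k_def by (metis nth_eq_iff_index_eq atLeastLessThan_iff)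
      have 2: "(i+1) mod k = j"
        using a assms(1) ij im unfolding k_def by (metis nth_eq_iff_index_eq atLeastLessThan_iff)
      have False
      proof (cases "j + 1 < k")
        case True
        then have "i = j + 1" using 1 by simp
        then show False using 2 k3 ij by (cases "j + 2 < k") (auto simp: mod_if)
      next
        case False
        then have "i = 0" using 1 ij by (simp add: mod_if)
        then show False using 2 k3 False ij by auto
      qed
      then show ?thesis ..
    qed
  qed
  then have "distinct (map g [0..<k])" by (simp add: distinct_map)
  then have "count (mset (map g [0..<k])) e \<le> 1"
    unfolding distinct_count_atmost_1 by (metis order_refl zero_le_one)
  then show ?thesis unfolding cycle_edges_def g_def k_def .
qed

lemma extras:
  assumes "D \<noteq> []" "hd D = y" "hd (W @ [last D, y]) = 0"
    "cC + cycle_edges D = S + cycle_edges (W @ [last D, y])"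
  shows "cC + cycle_edges (D @ E) = S + cycle_edges (W @ [last D] @ E @ [y])"
proof (cases "E = []")
  case True then show ?thesis using assms by simp
next
  case False
  define x where "x = last D"
  have g: "cycle_edges (W @ [x, y]) = add_mset {y, 0} (add_mset {x, y} (pe (W @ [x])))"
  proof -
    have "cycle_edges (W @ [x, y]) = add_mset {y, 0} (pe (W @ [x, y]))"
      using assms(3) by (simp add: cycle_edges_pe x_def)
    moreover have "pe (W @ [x, y]) = pe (W @ [x]) + pe [x, y]"
      using pe_append_Cons[of W x "[y]"] by simp
    ultimately show ?thesis by simp
  qed
  have d: "cycle_edges D = add_mset {x, y} (pe D)"
    using assms(1,2) by (simp add: cycle_edges_pe x_def)
  have eq0: "cC + pe D = S + add_mset {y, 0} (pe (W @ [x]))"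
    using assms(4) unfolding d g x_def[symmetric] by simp
  have de: "cycle_edges (D @ E) = add_mset {last E, y} (pe D + pe (x # E))"
    using assms(1,2) False pe_append_gen[OF assms(1), of E] by (simp add: cycle_edges_pe x_def)
  have hd0: "hd (W @ [x] @ E @ [y]) = 0" using assms(3) by (cases W) (auto simp: x_def)
  have dp: "cycle_edges (W @ [x] @ E @ [y]) = add_mset {y, 0} (pe (W @ [x]) + add_mset {last E, y} (pe (x # E)))"
  proof -
    have "cycle_edges (W @ [x] @ E @ [y]) = add_mset {y, 0} (pe (W @ [x] @ E @ [y]))"
      using hd0 by (simp add: cycle_edges_pe)
    moreover have "pe (W @ [x] @ E @ [y]) = pe (W @ [x]) + pe (x # E @ [y])"
      using pe_append_Cons[of W x "E @ [y]"] by simp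
    moreover have "pe (x # E @ [y]) = add_mset {last E, y} (pe (x # E))"
      using pe_snoc[of "x # E" y] False by simp
    ultimately show ?thesis by simp
  qed
  show ?thesis unfolding x_def[symmetric] de dp using eq0
    by (simp add: add_mset_commute add.assoc[symmetric])
qed

theorem mainTheorem15:
  fixes n m :: nat and M :: "nat list"
  assumes "3 \<le> m" and "m \<le> n"
    and "\<forall>x \<in> set M. 2 \<le> x"
    and "sum_list M = m"
  shows "\<exists>G. subgraph_2K n G \<and> cycle_decomp G (M @ [n]) \<and> cycle_decomp G [m, n]"
proof -
  have "M \<noteq> []" using assms(1,4) by auto
  then obtain p R where M: "M = p # R" by (cases M) auto
  have p2: "2 \<le> p" and R2: "\<forall>q\<in>set R. 2 \<le> q" using assms(3) M by auto
  obtain r where r: "p = Suc (Suc r)" using p2 by (metis add_2_eq_Suc le_Suc_ex)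
  define D0 where "D0 = Suc r # [0..<Suc r]"
  define W0 where "W0 = [0..<r]"
  have lD0: "last D0 = r" unfolding D0_def by simp
  have Wp: "W0 @ [last D0, p - 1] = [0..<p]" unfolding lD0 W0_def r by simp
  have ceD0: "cycle_edges D0 = cycle_edges [0..<p]"
    unfolding D0_def cycle_edges_rot r by simp
  have base_cyc: "\<forall>i<length [[0..<p]]. is_cycle ([p] ! i) ([[0..<p]] ! i)"
    using p2 by (simp add: is_cycle_def)
  have "\<exists>D W cs. distinct D \<and> set D = {0..<p + sum_list R} \<and> D \<noteq> [] \<and> hd D = p + sum_list R - 1 \<and>
     distinct (W @ [last D, p + sum_list R - 1]) \<and> set (W @ [last D, p + sum_list R - 1]) = {0..<p + sum_list R} \<and>
     hd (W @ [last D, p + sum_list R - 1]) = 0 \<and>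
     cycle_edges [0..<p + sum_list R] + cycle_edges D = sum_list (map cycle_edges cs) + cycle_edges (W @ [last D, p + sum_list R - 1]) \<and>
     length cs = length ([p] @ R) \<and> (\<forall>i<length cs. is_cycle (([p] @ R)!i) (cs!i))"
  proof (rule build[of R p D0 W0 "[[0..<p]]" "[p]", OF R2 _ _ _ _ _ _ _ _ _ _ base_cyc])
    show "distinct (W0 @ [last D0, p - 1])" "set (W0 @ [last D0, p - 1]) = {0..<p}"
      "hd (W0 @ [last D0, p - 1]) = 0" unfolding Wp using p2 by auto
    show "cycle_edges [0..<p] + cycle_edges D0 = sum_list (map cycle_edges [[0..<p]]) + cycle_edges (W0 @ [last D0, p - 1])"
      unfolding Wp ceD0 by simp
  qed (auto simp: D0_def r)
  moreover have sm: "p + sum_list R = m" using assms(4) M by simp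
  ultimately obtain D W cs where
    dD: "distinct D" and sD: "set D = {0..<m}" and nD: "D \<noteq> []" and hD: "hd D = m - 1" and
    dW: "distinct (W @ [last D, m - 1])" and sW: "set (W @ [last D, m - 1]) = {0..<m}" and
    hW: "hd (W @ [last D, m - 1]) = 0" and
    eq: "cycle_edges [0..<m] + cycle_edges D = sum_list (map cycle_edges cs) + cycle_edges (W @ [last D, m - 1])" and
    lc: "length cs = length M" and cy: "\<forall>i<length cs. is_cycle (M!i) (cs!i)"
    unfolding M by auto
  define E where "E = [m..<n]"
  define Df where "Df = D @ E"
  define Dp where "Dp = W @ [last D] @ E @ [m - 1]"
  have eqf: "cycle_edges [0..<m] + cycle_edges Df = sum_list (map cycle_edges cs) + cycle_edges Dp"
    unfolding Df_def Dp_def by (rule extras[OF nD hD hW eq])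
  have sE: "set E = {m..<n}" "distinct E" unfolding E_def by auto
  have dDf: "distinct Df" unfolding Df_def using dD sD sE by auto
  have sDf: "set Df = {0..<n}" unfolding Df_def using sD sE assms(2) by auto
  have lDf: "length Df = n" using distinct_card[OF dDf] sDf by simp
  have mDp: "mset Dp = mset ((W @ [last D, m - 1]) @ E)" unfolding Dp_def by simp
  have dDp: "distinct Dp"
  proof -
    have "set (W @ [last D, m - 1]) \<inter> set E = {}" unfolding sW sE(1) by auto
    then show ?thesis unfolding mset_eq_imp_distinct_iff[OF mDp] using dW sE(2)
      by (simp only: distinct_append)
  qed
  have "set Dp = set (W @ [last D, m - 1]) \<union> set E" using mset_eq_setD[OF mDp] by simp
  also have "\<dots> = {0..<n}" unfolding sW sE(1) using assms(2) by auto
  finally have sDp: "set Dp = {0..<n}" .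
  have lDp: "length Dp = n" using distinct_card[OF dDp] sDp by simp
  define G where "G = cycle_edges [0..<m] + cycle_edges Df"
  have n3: "3 \<le> n" using assms by simp
  have sub: "subgraph_2K n G"
    unfolding subgraph_2K_def
  proof (intro conjI allI ballI)
    fix e assume "e \<in># G"
    then consider "e \<in># cycle_edges [0..<m]" | "e \<in># cycle_edges Df" unfolding G_def by auto
    then show "\<exists>u v. u < n \<and> v < n \<and> u \<noteq> v \<and> e = {u, v}"
    proof cases
      case 1 then show ?thesis using assms(1,2) by (intro ce_edge[of "[0..<m]"]) auto
    next
      case 2 then show ?thesis using dDf lDf sDf n3 by (intro ce_edge[of Df]) auto
    qed
  next
    fix e
    have "count (cycle_edges [0..<m]) e \<le> 1" using assms(1) by (intro ce_count) auto
    moreover have "count (cycle_edges Df) e \<le> 1" using dDf lDf n3 by (intro ce_count) auto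
    ultimately show "count G e \<le> 2" unfolding G_def by simp
  qed
  have c1: "cycle_decomp G (M @ [n])"
    unfolding cycle_decomp_def
  proof (intro exI[of _ "cs @ [Dp]"] conjI allI impI)
    show "length (cs @ [Dp]) = length (M @ [n])" using lc by simp
  next
    fix i assume "i < length (cs @ [Dp])"
    then consider "i < length cs" | "i = length cs" by fastforce
    then show "is_cycle ((M @ [n]) ! i) ((cs @ [Dp]) ! i)"
    proof cases
      case 1 then show ?thesis using cy lc by (simp add: nth_append)
    next
      case 2 then show ?thesis using lc dDp lDp n3 by (simp add: nth_append is_cycle_def)
    qed
  next
    show "G = sum_list (map cycle_edges (cs @ [Dp]))" unfolding G_def eqf by simp
  qed
  have c2: "cycle_decomp G [m, n]"
    unfolding cycle_decomp_def
  proof (intro exI[of _ "[[0..<m], Df]"] conjI allI impI)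
    fix i assume "i < length [[0..<m], Df]"
    then have "i = 0 \<or> i = 1" by auto
    then show "is_cycle ([m, n] ! i) ([[0..<m], Df] ! i)"
      using assms(1) dDf lDf n3 by (auto simp: is_cycle_def)
  qed (simp_all add: G_def)
  show ?thesis using sub c1 c2 by blast
qed

end
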